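(* Let $\lambda>0$ and let $H_3=\mathbb{R}^3$ with coordinates $(x,y,z)$ carry the Lorentzian metric $g_2=\frac{1}{\lambda^2}dx^2+dy^2-(x\,dy+dz)^2$, with Levi-Civita connection $\nabla$. Let $e_1=\partial_y-x\partial_z$, $e_2=\lambda\partial_x$, $e_3=\partial_z$, and let $V_3=\lambda\partial_x-\lambda y\partial_z\,(=e_2-\lambda ye_3)$. Then every $V_3$-magnetic curve $\gamma(t)=(x(t),y(t),z(t))$, i.e. every smooth curve with $\nabla_{\gamma'}\gamma'=V_3\wedge\gamma'$, satisfies the system $y''-x'(z'+xy')=yx'+(z'+xy')$, $\frac{x''}{\lambda}+\lambda y'(z'+xy')=-\lambda yy'$, $(z'+xy')'=y'$.
   Context: $(e_1,e_2,e_3)$ is a $g_2$-orthonormal frame with $e_3$ timelike. For $X=\sum X^ie_i$, $Y=\sum Y^ie_i$ the vector product is defined in this frame by $X\wedge Y=(X^2Y^3-X^3Y^2)e_1+(X^3Y^1-X^1Y^3)e_2+(X^2Y^1-X^1Y^2)e_3$. Primes denote derivatives in $t$. *)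

theory Defs
  imports "HOL-Analysis.Analysis"
begin

text \<open>Points of H_3 = R^3 are vectors p :: real^3 with p$1 = x, p$2 = y, p$3 = z.\<close>

text \<open>Matrix of the Lorentzian metric g_2 = (1/lambda^2) dx^2 + dy^2 - (x dy + dz)^2
  in the coordinate basis (d_x, d_y, d_z).\<close>
definition g2 :: "real \<Rightarrow> real^3 \<Rightarrow> real^3^3" where
  "g2 lam p = (\<chi> i j.
      (if i = 1 \<and> j = 1 then 1 / lam^2 else 0)
    + (if i = 2 \<and> j = 2 then 1 else 0)
    - (if i = 1 then 0 else if i = 2 then p$1 else 1)
    * (if j = 1 then 0 else if j = 2 then p$1 else 1))"

definition pderiv3 :: "(real^3 \<Rightarrow> real) \<Rightarrow> 3 \<Rightarrow> real^3 \<Rightarrow> real" where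
  "pderiv3 f k p = deriv (\<lambda>s. f (p + s *\<^sub>R axis k 1)) 0"

definition christoffel :: "(real^3 \<Rightarrow> real^3^3) \<Rightarrow> real^3 \<Rightarrow> 3 \<Rightarrow> 3 \<Rightarrow> 3 \<Rightarrow> real" where
  "christoffel g p k i j = (1/2) * (\<Sum>l\<in>UNIV. matrix_inv (g p) $ k $ l *
      (pderiv3 (\<lambda>q. g q $ j $ l) i p + pderiv3 (\<lambda>q. g q $ i $ l) j p
       - pderiv3 (\<lambda>q. g q $ i $ j) l p))"

text \<open>Covariant acceleration nabla_{gamma'} gamma' at a point p with velocity v and
  coordinate second derivative a, in coordinate components.\<close>
definition cov_accel :: "(real^3 \<Rightarrow> real^3^3) \<Rightarrow> real^3 \<Rightarrow> real^3 \<Rightarrow> real^3 \<Rightarrow> real^3" where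
  "cov_accel g p v a = (\<chi> k. a $ k + (\<Sum>i\<in>UNIV. \<Sum>j\<in>UNIV. christoffel g p k i j * v $ i * v $ j))"

definition frame :: "real \<Rightarrow> real^3 \<Rightarrow> 3 \<Rightarrow> real^3" where
  "frame lam p i = (if i = 1 then vector [0, 1, - p$1]
                    else if i = 2 then vector [lam, 0, 0]
                    else vector [0, 0, 1])"

definition frame_coords :: "real \<Rightarrow> real^3 \<Rightarrow> real^3 \<Rightarrow> real^3" where
  "frame_coords lam p X = (THE c. X = (\<Sum>i\<in>UNIV. c $ i *\<^sub>R frame lam p i))"

definition wedge :: "real \<Rightarrow> real^3 \<Rightarrow> real^3 \<Rightarrow> real^3 \<Rightarrow> real^3" where
  "wedge lam p X Y = (let a = frame_coords lam p X; b = frame_coords lam p Y in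
      (a$2 * b$3 - a$3 * b$2) *\<^sub>R frame lam p 1
    + (a$3 * b$1 - a$1 * b$3) *\<^sub>R frame lam p 2
    + (a$2 * b$1 - a$1 * b$2) *\<^sub>R frame lam p 3)"

definition V3 :: "real \<Rightarrow> real^3 \<Rightarrow> real^3" where
  "V3 lam p = vector [lam, 0, - lam * p$2]"

definition smooth_curve_derivs :: "real set \<Rightarrow> (nat \<Rightarrow> real \<Rightarrow> real^3) \<Rightarrow> bool" where
  "smooth_curve_derivs I D \<longleftrightarrow>
     (\<forall>n. \<forall>t\<in>I. (D n has_vector_derivative D (Suc n) t) (at t))"

end

theory Submission
  imports Defs
begin

definition Ginv :: "real \<Rightarrow> real^3 \<Rightarrow> real^3^3" where
  "Ginv lam p = (\<chi> i j. if i = 1 \<and> j = 1 then lam^2 else if i = 1 \<or> j = 1 then 0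
     else if i = 2 \<and> j = 2 then 1 else if i = 3 \<and> j = 3 then (p$1)^2 - 1 else - p$1)"

lemma g2_Ginv: "lam \<noteq> 0 \<Longrightarrow> g2 lam p ** Ginv lam p = mat 1"
  by (simp add: g2_def Ginv_def matrix_matrix_mult_def mat_def vec_eq_iff forall_3 sum_3 power2_eq_square algebra_simps)
lemma Ginv_g2: "lam \<noteq> 0 \<Longrightarrow> Ginv lam p ** g2 lam p = mat 1"
  by (simp add: g2_def Ginv_def matrix_matrix_mult_def mat_def vec_eq_iff forall_3 sum_3 power2_eq_square algebra_simps)

lemma inv_g2: assumes "lam \<noteq> 0" shows "matrix_inv (g2 lam p) = Ginv lam p"
proof -
  let ?A = "g2 lam p" and ?B = "Ginv lam p"
  have ex: "?A ** ?B = mat 1 \<and> ?B ** ?A = mat 1" using g2_Ginv Ginv_g2 assms by blast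
  have "?A ** matrix_inv ?A = mat 1 \<and> matrix_inv ?A ** ?A = mat 1"
    unfolding matrix_inv_def by (rule someI[of _ ?B]) (rule ex)
  then have "matrix_inv ?A = (?B ** ?A) ** matrix_inv ?A" by (simp add: ex)
  also have "\<dots> = ?B" by (simp add: matrix_mul_assoc[symmetric] \<open>?A ** matrix_inv ?A = mat 1 \<and> _\<close>)
  finally show ?thesis .
qed

lemma pd_poly: "pderiv3 (\<lambda>q. a + b * q$1 + c * (q$1)^2) k p = (if k = 1 then b + 2*c*p$1 else 0)"
proof -
  have "((\<lambda>s. a + b * (p + s *\<^sub>R axis k 1)$1 + c * ((p + s *\<^sub>R axis k 1)$1)^2) has_real_derivative
     (if k = 1 then b + 2*c*p$1 else 0)) (at 0)"
  proof (cases "k = 1")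
    case True
    then show ?thesis by (auto simp: axis_def intro!: derivative_eq_intros)
  next
    case False
    then show ?thesis by (auto simp: axis_def intro!: derivative_eq_intros)
  qed
  then show ?thesis unfolding pderiv3_def by (rule DERIV_imp_deriv)
qed

lemma g2_entry: "g2 lam q $ i $ j =
   ((if i = 1 \<and> j = 1 then 1 / lam^2 else 0) + (if i = 2 \<and> j = 2 then 1 else 0) - (if i = 3 \<and> j = 3 then 1 else 0))
   + (if (i = 2 \<and> j = 3) \<or> (i = 3 \<and> j = 2) then -1 else 0) * q$1
   + (if i = 2 \<and> j = 2 then -1 else 0) * (q$1)^2"
  using exhaust_3[of i] exhaust_3[of j] by (auto simp: g2_def power2_eq_square)

lemma pd_g2: "pderiv3 (\<lambda>q. g2 lam q $ i $ j) k p = (if k = 1 then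
   (if (i = 2 \<and> j = 3) \<or> (i = 3 \<and> j = 2) then -1 else 0) + 2 * (if i = 2 \<and> j = 2 then -1 else 0) * p$1 else 0)"
  unfolding g2_entry by (rule pd_poly)


lemma cov_accel_g2: assumes "lam \<noteq> 0"
  shows "cov_accel (g2 lam) p v a = vector [
     a$1 + lam^2 * v$2 * (v$3 + p$1 * v$2),
     a$2 - v$1 * (v$3 + p$1 * v$2),
     a$3 + ((p$1)^2 + 1) * v$1 * v$2 + p$1 * v$1 * v$3]"
  unfolding cov_accel_def christoffel_def inv_g2[OF assms] pd_g2
  by (simp add: vec_eq_iff forall_3 sum_3 Ginv_def field_simps power2_eq_square)

lemma frame_coords_eq: assumes "lam \<noteq> 0"
  shows "frame_coords lam p X = vector [X$2, X$1/lam, X$3 + p$1 * X$2]"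
  unfolding frame_coords_def
proof (rule the_equality)
  show "X = (\<Sum>i\<in>UNIV. (vector [X$2, X$1/lam, X$3 + p$1 * X$2] :: real^3) $ i *\<^sub>R frame lam p i)"
    using assms by (simp add: vec_eq_iff forall_3 sum_3 frame_def)
next
  fix c :: "real^3" assume "X = (\<Sum>i\<in>UNIV. c $ i *\<^sub>R frame lam p i)"
  then have "X$1 = lam * c$2" "X$2 = c$1" "X$3 = - p$1 * c$1 + c$3"
    by (simp_all add: sum_3 frame_def)
  then show "c = vector [X$2, X$1/lam, X$3 + p$1 * X$2]"
    using assms by (simp add: vec_eq_iff forall_3)
qed

lemma wedge_V3: assumes "lam \<noteq> 0"
  shows "wedge lam p (V3 lam p) v = vector [(- (lam^2) * p$2 * v$2),
     (v$3 + p$1 * v$2) + p$2 * v$1, - p$1 * ((v$3 + p$1 * v$2) + p$2 * v$1) + v$2]"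
  unfolding wedge_def Let_def frame_coords_eq[OF assms]
  using assms by (simp add: vec_eq_iff forall_3 V3_def frame_def field_simps power2_eq_square)


lemma vd_comp: "(f has_vector_derivative f') (at t) \<Longrightarrow> ((\<lambda>s. f s $ i) has_real_derivative f' $ i) (at t)"
  unfolding has_real_derivative_iff_has_vector_derivative
  by (drule bounded_linear.has_vector_derivative[OF bounded_linear_vec_nth]) simp

theorem mainTheorem7:
  fixes lam :: real and I :: "real set" and D :: "nat \<Rightarrow> real \<Rightarrow> real^3"
  assumes "lam > 0"
    and "open I" and "is_interval I"
    and "smooth_curve_derivs I D"
    and "\<forall>t\<in>I. cov_accel (g2 lam) (D 0 t) (D 1 t) (D 2 t)
                 = wedge lam (D 0 t) (V3 lam (D 0 t)) (D 1 t)"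
  shows "\<forall>t\<in>I.
      D 2 t $ 2 - D 1 t $ 1 * (D 1 t $ 3 + D 0 t $ 1 * D 1 t $ 2)
        = D 0 t $ 2 * D 1 t $ 1 + (D 1 t $ 3 + D 0 t $ 1 * D 1 t $ 2)
    \<and> D 2 t $ 1 / lam + lam * D 1 t $ 2 * (D 1 t $ 3 + D 0 t $ 1 * D 1 t $ 2)
        = - lam * D 0 t $ 2 * D 1 t $ 2
    \<and> ((\<lambda>s. D 1 s $ 3 + D 0 s $ 1 * D 1 s $ 2) has_real_derivative D 1 t $ 2) (at t)"
proof
  fix t assume t: "t \<in> I"
  have l: "lam \<noteq> 0" using assms(1) by simp
  have E: "cov_accel (g2 lam) (D 0 t) (D 1 t) (D 2 t) = wedge lam (D 0 t) (V3 lam (D 0 t)) (D 1 t)"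
    using assms(5) t by blast
  have e1: "D 2 t $ 1 + lam^2 * D 1 t $ 2 * (D 1 t $ 3 + D 0 t $ 1 * D 1 t $ 2) = - (lam^2) * D 0 t $ 2 * D 1 t $ 2"
    using arg_cong[OF E, of "\<lambda>v. v$1"] unfolding cov_accel_g2[OF l] wedge_V3[OF l] by simp
  have e2: "D 2 t $ 2 - D 1 t $ 1 * (D 1 t $ 3 + D 0 t $ 1 * D 1 t $ 2) = (D 1 t $ 3 + D 0 t $ 1 * D 1 t $ 2) + D 0 t $ 2 * D 1 t $ 1"
    using arg_cong[OF E, of "\<lambda>v. v$2"] unfolding cov_accel_g2[OF l] wedge_V3[OF l] by simp
  have e3: "D 2 t $ 3 + ((D 0 t $ 1)^2 + 1) * D 1 t $ 1 * D 1 t $ 2 + D 0 t $ 1 * D 1 t $ 1 * D 1 t $ 3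
     = - D 0 t $ 1 * ((D 1 t $ 3 + D 0 t $ 1 * D 1 t $ 2) + D 0 t $ 2 * D 1 t $ 1) + D 1 t $ 2"
    using arg_cong[OF E, of "\<lambda>v. v$3"] unfolding cov_accel_g2[OF l] wedge_V3[OF l] by simp
  have d0: "(D 0 has_vector_derivative D 1 t) (at t)" and d1: "(D 1 has_vector_derivative D 2 t) (at t)"
    using assms(4) t unfolding smooth_curve_derivs_def by (metis One_nat_def, metis Suc_1)
  have "((\<lambda>s. D 1 s $ 3 + D 0 s $ 1 * D 1 s $ 2) has_real_derivative
     D 2 t $ 3 + (D 1 t $ 1 * D 1 t $ 2 + D 0 t $ 1 * D 2 t $ 2)) (at t)"
    using DERIV_add[OF vd_comp[OF d1, of 3] DERIV_mult[OF vd_comp[OF d0, of 1] vd_comp[OF d1, of 2]]]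
    by (simp add: mult.commute)
  moreover have "D 2 t $ 3 + (D 1 t $ 1 * D 1 t $ 2 + D 0 t $ 1 * D 2 t $ 2) = D 1 t $ 2"
  proof -
    have "D 2 t $ 2 = D 1 t $ 1 * (D 1 t $ 3 + D 0 t $ 1 * D 1 t $ 2) + (D 1 t $ 3 + D 0 t $ 1 * D 1 t $ 2) + D 0 t $ 2 * D 1 t $ 1"
      using e2 by linarith
    moreover have "D 2 t $ 3 = - D 0 t $ 1 * ((D 1 t $ 3 + D 0 t $ 1 * D 1 t $ 2) + D 0 t $ 2 * D 1 t $ 1) + D 1 t $ 2
       - ((D 0 t $ 1)^2 + 1) * D 1 t $ 1 * D 1 t $ 2 - D 0 t $ 1 * D 1 t $ 1 * D 1 t $ 3"
      using e3 by linarith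
    ultimately show ?thesis by (simp add: algebra_simps power2_eq_square)
  qed
  moreover have "D 2 t $ 1 / lam + lam * D 1 t $ 2 * (D 1 t $ 3 + D 0 t $ 1 * D 1 t $ 2) = - lam * D 0 t $ 2 * D 1 t $ 2"
  proof -
    have "D 2 t $ 1 = - (lam^2) * D 0 t $ 2 * D 1 t $ 2 - lam^2 * D 1 t $ 2 * (D 1 t $ 3 + D 0 t $ 1 * D 1 t $ 2)"
      using e1 by linarith
    then show ?thesis using l by (simp add: field_simps power2_eq_square)
  qed
  ultimately show "D 2 t $ 2 - D 1 t $ 1 * (D 1 t $ 3 + D 0 t $ 1 * D 1 t $ 2)
        = D 0 t $ 2 * D 1 t $ 1 + (D 1 t $ 3 + D 0 t $ 1 * D 1 t $ 2)
    \<and> D 2 t $ 1 / lam + lam * D 1 t $ 2 * (D 1 t $ 3 + D 0 t $ 1 * D 1 t $ 2)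
        = - lam * D 0 t $ 2 * D 1 t $ 2
    \<and> ((\<lambda>s. D 1 s $ 3 + D 0 s $ 1 * D 1 s $ 2) has_real_derivative D 1 t $ 2) (at t)"
    using e2 by simp
qed

end
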